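(* Let $G$ be a finite simple graph on vertex set $\mathcal C$ with a disjoint decomposition $\mathcal C=\mathcal C_I\cup\mathcal C_M\cup\mathcal C_O$, where $|\mathcal C_I|=|\mathcal C_O|=n$, the input qudits are labelled $\mathcal C_I=\{I_1,\dots,I_n\}$ and the output qudits $\mathcal C_O=\{O_1,\dots,O_n\}$. Let $|\phi\rangle_{\mathcal C}$ be the cluster state of $G$ and $S$ its generator. For each $a\in\mathcal C_M$ fix a unitary $u_a$ on $\mathbb C^d$ and an outcome $s_a\in\mathbb Z_d$, and let $P=\bigotimes_{a\in\mathcal C_M}u_a|s_a\rangle\langle s_a|u_a^{\dagger}$. Let $U$ be a unitary on $(\mathbb C^d)^{\otimes n}$, acting on $\mathcal C_O$ with the $i$-th tensor factor identified with $O_i$; for an operator $A$ on $(\mathbb C^d)^{\otimes n}$ write $(A)_{\mathcal C_O}$ for this action. Suppose that $|\psi\rangle=P|\phi\rangle_{\mathcal C}$ is nonzero and satisfies, for some $\lambda_{x,i},\lambda_{z,i}\in\mathbb Z_d$ and all $1\le i\le n$, $$X_{I_i}\,(UX_iU^{\dagger})_{\mathcal C_O}|\psi\rangle=q^{-\lambda_{x,i}}|\psi\rangle,\qquad Z_{I_i}^{\dagger}\,(UZ_iU^{\dagger})_{\mathcal C_O}|\psi\rangle=q^{-\lambda_{z,i}}|\psi\rangle,$$ where $X_i,Z_i$ act on the $i$-th factor of $(\mathbb C^d)^{\otimes n}$. Then for all outcomes $s_{I_1},\dots,s_{I_n}\in\mathbb Z_d$ there is a nonzero constant $c\in\mathbb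 C$ such that for every input state $|\psi(\mathrm{in})\rangle$ on $\mathcal C_I$, $$\Big(\bigotimes_{i=1}^n|x(s_{I_i})\rangle\langle x(s_{I_i})|_{I_i}\Big)\,P\;S\big(|\psi(\mathrm{in})\rangle_{\mathcal C_I}\otimes|+\rangle_{\mathcal C_M\cup\mathcal C_O}\big)=c\,\Big(\bigotimes_{i}|x(s_{I_i})\rangle_{I_i}\Big)\otimes\Big(\bigotimes_{a\in\mathcal C_M}u_a|s_a\rangle_a\Big)\otimes|\psi(\mathrm{out})\rangle_{\mathcal C_O},$$ where $|\psi(\mathrm{out})\rangle=U\,U_\Sigma|\psi(\mathrm{in})\rangle$ (with $|\psi(\mathrm{in})\rangle$ transported to $\mathcal C_O$ via $I_i\mapsto O_i$) and $$U_\Sigma=\bigotimes_{i=1}^{n}Z_i^{-\lambda_{x,i}-s_{I_i}}X_i^{\lambda_{z,i}}.$$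
   Context: Fix an integer $d\ge 2$ and $q=e^{2\pi i/d}$. A qudit has Hilbert space $\mathbb C^d$ with orthonormal basis $\{|k\rangle:k\in\mathbb Z_d\}$; $Z|k\rangle=q^k|k\rangle$, $X|k\rangle=|k-1\bmod d\rangle$ (so $XZ=qZX$); $|x(j)\rangle=d^{-1/2}\sum_k q^{jk}|k\rangle$, the eigenvector of $X$ with eigenvalue $q^j$. A subscript $a$ on an operator/state means it acts on/belongs to qudit $a$. For qudits $a,b$, $S_{ab}|j\rangle_a|k\rangle_b=q^{jk}|j\rangle_a|k\rangle_b$. For a graph $G$ on vertex set $\mathcal C$, the cluster state generator is $S=\prod_{\{a,b\}\in E(G)}S_{ab}$, $|+\rangle_{A}=\bigotimes_{a\in A}|x(0)\rangle_a$, and the cluster state is $|\phi\rangle_{\mathcal C}=S|+\rangle_{\mathcal C}$; it satisfies $X_a^\dagger\bigotimes_{b\text{ neighbour of }a}Z_b|\phi\rangle_{\mathcal C}=|\phi\rangle_{\mathcal C}$ for all $a$. Measuring qudit $a$ "in pattern $u_aZu_a^\dagger$" means measuring in the basis $\{u_a|s\rangle\}_{s\in\mathbb Z_d}$, outcome $s$ corresponding to $u_a|s\rangle$; input qudits are measured in the eigenbasis of $X$, outcome $s$ corresponding to $|x(s)\rangle$. *)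

theory Defs
  imports Complex_Main
begin

text \<open>A (pure, unnormalised) state of the qudits in a set A of
labels is a coefficient function on computational-basis configurations
k :: 'a \<Rightarrow> nat with k a < d on A and k a = 0 off A.
Single-qudit operators are d x d matrices M :: nat \<Rightarrow> nat \<Rightarrow> complex,
M j k = <j|M|k>.  Operators on n qudits are matrices indexed by configurations
of {..<n}.\<close>

definition cfgs :: "'a set \<Rightarrow> nat \<Rightarrow> ('a \<Rightarrow> nat) set" where
  "cfgs A d = {k. (\<forall>a\<in>A. k a < d) \<and> (\<forall>a. a \<notin> A \<longrightarrow> k a = 0)}"

text \<open>qpow d m = q^m with q = exp(2 pi i / d)\<close>
definition qpow :: "nat \<Rightarrow> int \<Rightarrow> complex" where
  "qpow d m = cis (2 * pi * of_int m / of_nat d)"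

definition Zpow :: "nat \<Rightarrow> int \<Rightarrow> nat \<Rightarrow> nat \<Rightarrow> complex" where
  "Zpow d m j k = (if j = k then qpow d (m * int j) else 0)"

text \<open>X |k> = |k-1 mod d>, hence X^m |k> = |k-m mod d>\<close>
definition Xpow :: "nat \<Rightarrow> int \<Rightarrow> nat \<Rightarrow> nat \<Rightarrow> complex" where
  "Xpow d m j k = (if int j = (int k - m) mod int d then 1 else 0)"

definition Xm :: "nat \<Rightarrow> nat \<Rightarrow> nat \<Rightarrow> complex" where "Xm d = Xpow d 1"
definition Zm :: "nat \<Rightarrow> nat \<Rightarrow> nat \<Rightarrow> complex" where "Zm d = Zpow d 1"
definition Zdag :: "nat \<Rightarrow> nat \<Rightarrow> nat \<Rightarrow> complex" where "Zdag d = Zpow d (-1)"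

definition id1 :: "nat \<Rightarrow> nat \<Rightarrow> complex" where
  "id1 j k = (if j = k then 1 else 0)"

definition mmul1 :: "nat \<Rightarrow> (nat \<Rightarrow> nat \<Rightarrow> complex) \<Rightarrow> (nat \<Rightarrow> nat \<Rightarrow> complex) \<Rightarrow> nat \<Rightarrow> nat \<Rightarrow> complex" where
  "mmul1 d A B j k = (\<Sum>l<d. A j l * B l k)"

definition adj1 :: "(nat \<Rightarrow> nat \<Rightarrow> complex) \<Rightarrow> nat \<Rightarrow> nat \<Rightarrow> complex" where
  "adj1 A j k = cnj (A k j)"

definition unitary1 :: "nat \<Rightarrow> (nat \<Rightarrow> nat \<Rightarrow> complex) \<Rightarrow> bool" where
  "unitary1 d u \<longleftrightarrow> (\<forall>j<d. \<forall>k<d. mmul1 d u (adj1 u) j k = id1 j k \<and> mmul1 d (adj1 u) u j k = id1 j k)"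

definition xvec :: "nat \<Rightarrow> nat \<Rightarrow> nat \<Rightarrow> complex" where
  "xvec d s k = qpow d (int s * int k) / complex_of_real (sqrt (real d))"

definition proj1 :: "(nat \<Rightarrow> complex) \<Rightarrow> nat \<Rightarrow> nat \<Rightarrow> complex" where
  "proj1 v j k = v j * cnj (v k)"

definition ucol :: "(nat \<Rightarrow> nat \<Rightarrow> complex) \<Rightarrow> nat \<Rightarrow> nat \<Rightarrow> complex" where
  "ucol u s j = u j s"

definition nmul :: "nat \<Rightarrow> nat \<Rightarrow> ((nat \<Rightarrow> nat) \<Rightarrow> (nat \<Rightarrow> nat) \<Rightarrow> complex)
   \<Rightarrow> ((nat \<Rightarrow> nat) \<Rightarrow> (nat \<Rightarrow> nat) \<Rightarrow> complex) \<Rightarrow> (nat \<Rightarrow> nat) \<Rightarrow> (nat \<Rightarrow> nat) \<Rightarrow> complex" where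
  "nmul d n A B j k = (\<Sum>l\<in>cfgs {..<n} d. A j l * B l k)"

definition nadj :: "((nat \<Rightarrow> nat) \<Rightarrow> (nat \<Rightarrow> nat) \<Rightarrow> complex) \<Rightarrow> (nat \<Rightarrow> nat) \<Rightarrow> (nat \<Rightarrow> nat) \<Rightarrow> complex" where
  "nadj A j k = cnj (A k j)"

definition nid :: "(nat \<Rightarrow> nat) \<Rightarrow> (nat \<Rightarrow> nat) \<Rightarrow> complex" where
  "nid j k = (if j = k then 1 else 0)"

definition nunitary :: "nat \<Rightarrow> nat \<Rightarrow> ((nat \<Rightarrow> nat) \<Rightarrow> (nat \<Rightarrow> nat) \<Rightarrow> complex) \<Rightarrow> bool" where
  "nunitary d n U \<longleftrightarrow> (\<forall>j\<in>cfgs {..<n} d. \<forall>k\<in>cfgs {..<n} d.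
      nmul d n U (nadj U) j k = nid j k \<and> nmul d n (nadj U) U j k = nid j k)"

definition ntens :: "nat \<Rightarrow> (nat \<Rightarrow> nat \<Rightarrow> nat \<Rightarrow> complex) \<Rightarrow> (nat \<Rightarrow> nat) \<Rightarrow> (nat \<Rightarrow> nat) \<Rightarrow> complex" where
  "ntens n M j k = (\<Prod>i<n. M i (j i) (k i))"

definition nlocal :: "nat \<Rightarrow> nat \<Rightarrow> (nat \<Rightarrow> nat \<Rightarrow> complex) \<Rightarrow> (nat \<Rightarrow> nat) \<Rightarrow> (nat \<Rightarrow> nat) \<Rightarrow> complex" where
  "nlocal n i M = ntens n (\<lambda>l. if l = i then M else id1)"

definition nmv :: "nat \<Rightarrow> nat \<Rightarrow> ((nat \<Rightarrow> nat) \<Rightarrow> (nat \<Rightarrow> nat) \<Rightarrow> complex) \<Rightarrow> ((nat \<Rightarrow> nat) \<Rightarrow> complex) \<Rightarrow> (nat \<Rightarrow> nat) \<Rightarrow> complex" where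
  "nmv d n A \<psi> j = (if j \<in> cfgs {..<n} d then (\<Sum>k\<in>cfgs {..<n} d. A j k * \<psi> k) else 0)"

definition restr :: "'v set \<Rightarrow> ('v \<Rightarrow> nat) \<Rightarrow> 'v \<Rightarrow> nat" where
  "restr A k = (\<lambda>a. if a \<in> A then k a else 0)"

text \<open>tensor product of a state on A with a state on B (A, B disjoint)\<close>
definition tens :: "nat \<Rightarrow> 'v set \<Rightarrow> (('v \<Rightarrow> nat) \<Rightarrow> complex) \<Rightarrow> 'v set \<Rightarrow> (('v \<Rightarrow> nat) \<Rightarrow> complex)
   \<Rightarrow> ('v \<Rightarrow> nat) \<Rightarrow> complex" where
  "tens d A \<psi> B \<phi> k = (if k \<in> cfgs (A \<union> B) d then \<psi> (restr A k) * \<phi> (restr B k) else 0)"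

definition prod_state :: "nat \<Rightarrow> 'v set \<Rightarrow> ('v \<Rightarrow> nat \<Rightarrow> complex) \<Rightarrow> ('v \<Rightarrow> nat) \<Rightarrow> complex" where
  "prod_state d A f k = (if k \<in> cfgs A d then (\<Prod>a\<in>A. f a (k a)) else 0)"

definition plus_state :: "nat \<Rightarrow> 'v set \<Rightarrow> ('v \<Rightarrow> nat) \<Rightarrow> complex" where
  "plus_state d A = prod_state d A (\<lambda>a. xvec d 0)"

text \<open>an n-qudit state placed on qudits L 0, ..., L (n-1) (i-th factor at L i)\<close>
definition emb :: "nat \<Rightarrow> (nat \<Rightarrow> 'v) \<Rightarrow> nat \<Rightarrow> ((nat \<Rightarrow> nat) \<Rightarrow> complex) \<Rightarrow> ('v \<Rightarrow> nat) \<Rightarrow> complex" where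
  "emb d L n \<psi> k = (if k \<in> cfgs (L ` {..<n}) d then \<psi> (\<lambda>i. if i < n then k (L i) else 0) else 0)"

text \<open>tensor product of single-qudit operators M a acting on the qudits a \<in> A \<subseteq> C
  (identity elsewhere), on states of the qudits C\<close>
definition op_sites :: "nat \<Rightarrow> 'v set \<Rightarrow> 'v set \<Rightarrow> ('v \<Rightarrow> nat \<Rightarrow> nat \<Rightarrow> complex)
   \<Rightarrow> (('v \<Rightarrow> nat) \<Rightarrow> complex) \<Rightarrow> ('v \<Rightarrow> nat) \<Rightarrow> complex" where
  "op_sites d C A M \<psi> k = (if k \<in> cfgs C d then
      (\<Sum>j\<in>cfgs A d. (\<Prod>a\<in>A. M a (k a) (j a)) * \<psi> (override_on k j A)) else 0)"

definition op_at :: "nat \<Rightarrow> 'v set \<Rightarrow> 'v \<Rightarrow> (nat \<Rightarrow> nat \<Rightarrow> complex)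
   \<Rightarrow> (('v \<Rightarrow> nat) \<Rightarrow> complex) \<Rightarrow> ('v \<Rightarrow> nat) \<Rightarrow> complex" where
  "op_at d C a M = op_sites d C {a} (\<lambda>_. M)"

text \<open>(A)_{L}: an n-qudit operator A acting on the qudits L 0, ..., L (n-1)\<close>
definition op_on :: "nat \<Rightarrow> 'v set \<Rightarrow> (nat \<Rightarrow> 'v) \<Rightarrow> nat
   \<Rightarrow> ((nat \<Rightarrow> nat) \<Rightarrow> (nat \<Rightarrow> nat) \<Rightarrow> complex)
   \<Rightarrow> (('v \<Rightarrow> nat) \<Rightarrow> complex) \<Rightarrow> ('v \<Rightarrow> nat) \<Rightarrow> complex" where
  "op_on d C L n A \<psi> k = (if k \<in> cfgs C d then
      (\<Sum>j\<in>cfgs {..<n} d. A (\<lambda>i. if i < n then k (L i) else 0) j *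
          \<psi> (\<lambda>a. if a \<in> L ` {..<n} then j (the_inv_into {..<n} L a) else k a)) else 0)"

text \<open>cluster state generator S = prod_{edges {a,b}} S_ab, S_ab |j>|k> = q^(jk) |j>|k>;
  edges are two-element subsets of C\<close>
definition cluster_gen :: "nat \<Rightarrow> 'v set \<Rightarrow> 'v set set
   \<Rightarrow> (('v \<Rightarrow> nat) \<Rightarrow> complex) \<Rightarrow> ('v \<Rightarrow> nat) \<Rightarrow> complex" where
  "cluster_gen d C E \<psi> k = (if k \<in> cfgs C d then
      (\<Prod>e\<in>E. qpow d (\<Prod>a\<in>e. int (k a))) * \<psi> k else 0)"

definition cluster_state :: "nat \<Rightarrow> 'v set \<Rightarrow> 'v set set \<Rightarrow> ('v \<Rightarrow> nat) \<Rightarrow> complex" where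
  "cluster_state d C E = cluster_gen d C E (plus_state d C)"

definition simple_graph_on :: "'v set \<Rightarrow> 'v set set \<Rightarrow> bool" where
  "simple_graph_on C E \<longleftrightarrow> finite C \<and> E \<subseteq> {{a, b} | a b. a \<in> C \<and> b \<in> C \<and> a \<noteq> b}"

end

theory Submission
  imports Defs
begin

lemma qpow_add: "qpow d (a + b) = qpow d a * qpow d b"
  unfolding qpow_def by (simp add: cis_mult add_divide_distrib distrib_left)

lemma qpow_0[simp]: "qpow d 0 = 1" unfolding qpow_def by simp

lemma qpow_nz[simp]: "qpow d a \<noteq> 0" unfolding qpow_def by simp

lemma qpow_cnj: "cnj (qpow d a) = qpow d (- a)"
  unfolding qpow_def by (simp add: cis_cnj)

lemma qpow_mult_d: "d > 0 \<Longrightarrow> qpow d (int d * m) = 1"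
proof -
  assume "d > 0"
  have "2 * pi * real_of_int (int d * m) / real d = 2 * pi * real_of_int m"
    using \<open>d > 0\<close> by (simp add: field_simps)
  then show ?thesis unfolding qpow_def by simp
qed

lemma qpow_mod: "d > 0 \<Longrightarrow> qpow d (a mod int d) = qpow d a"
proof -
  assume d: "d > 0"
  have "qpow d a = qpow d (a mod int d + int d * (a div int d))" by simp
  also have "\<dots> = qpow d (a mod int d)" using d by (simp only: qpow_add qpow_mult_d) simp
  finally show ?thesis by simp
qed

lemma qpow_cong: "d > 0 \<Longrightarrow> a mod int d = b mod int d \<Longrightarrow> qpow d a = qpow d b"
  by (metis qpow_mod)

lemma qpow_eq_1: "d > 0 \<Longrightarrow> qpow d a = 1 \<Longrightarrow> a mod int d = 0"
proof -
  assume d: "d > 0" and h: "qpow d a = 1"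
  then have "cos (2 * pi * real_of_int a / real d) = 1" unfolding qpow_def
    by (metis cis.sel(1) one_complex.sel(1))
  then obtain m :: int where m: "2 * pi * real_of_int a / real d = real_of_int m * 2 * pi"
    using cos_one_2pi_int by blast
  then have "real_of_int a = real_of_int (m * int d)" using d by (simp add: field_simps)
  then have "a = m * int d" by linarith
  then show ?thesis by simp
qed

lemma qpow_eq_iff: "d > 0 \<Longrightarrow> qpow d a = qpow d b \<longleftrightarrow> a mod int d = b mod int d"
proof
  assume d: "d > 0" and h: "qpow d a = qpow d b"
  have "qpow d (a - b) * qpow d b = qpow d b" using h by (metis qpow_add diff_add_cancel)
  then have "qpow d (a - b) = 1" by simp
  then have "(a - b) mod int d = 0" using qpow_eq_1 d by blast
  then show "a mod int d = b mod int d" by (simp add: mod_eq_dvd_iff dvd_eq_mod_eq_0)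
qed (rule qpow_cong)


definition get :: "(nat \<Rightarrow> 'v) \<Rightarrow> nat \<Rightarrow> ('v \<Rightarrow> nat) \<Rightarrow> nat \<Rightarrow> nat" where
  "get L n k = (\<lambda>i. if i < n then k (L i) else 0)"
definition put :: "(nat \<Rightarrow> 'v) \<Rightarrow> nat \<Rightarrow> ('v \<Rightarrow> nat) \<Rightarrow> (nat \<Rightarrow> nat) \<Rightarrow> 'v \<Rightarrow> nat" where
  "put L n k j = (\<lambda>a. if a \<in> L ` {..<n} then j (the_inv_into {..<n} L a) else k a)"

lemma finite_cfgs[simp]: "finite A \<Longrightarrow> finite (cfgs A d)"
proof -
  assume "finite A"
  have "cfgs A d \<subseteq> {f. \<forall>x. (x \<in> A \<longrightarrow> f x \<in> {..<d}) \<and> (x \<notin> A \<longrightarrow> f x = 0)}"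
    unfolding cfgs_def by auto
  moreover have "finite {f. \<forall>x. (x \<in> A \<longrightarrow> f x \<in> {..<d}) \<and> (x \<notin> A \<longrightarrow> f x = (0::nat))}"
    by (rule finite_set_of_finite_funs[OF \<open>finite A\<close>]) simp
  ultimately show ?thesis by (rule finite_subset)
qed

lemma cfgsD: "k \<in> cfgs A d \<Longrightarrow> a \<in> A \<Longrightarrow> k a < d" unfolding cfgs_def by auto
lemma cfgsD0: "k \<in> cfgs A d \<Longrightarrow> a \<notin> A \<Longrightarrow> k a = 0" unfolding cfgs_def by auto
lemma cfgsI: "(\<And>a. a \<in> A \<Longrightarrow> k a < d) \<Longrightarrow> (\<And>a. a \<notin> A \<Longrightarrow> k a = 0) \<Longrightarrow> k \<in> cfgs A d"
  unfolding cfgs_def by auto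
lemma cfgs_upd: "k \<in> cfgs A d \<Longrightarrow> a \<in> A \<Longrightarrow> r < d \<Longrightarrow> k(a := r) \<in> cfgs A d"
  unfolding cfgs_def by auto

lemma cfgs_eqI: "k \<in> cfgs {..<n} d \<Longrightarrow> l \<in> cfgs {..<n} d \<Longrightarrow> (\<And>i. i < n \<Longrightarrow> k i = l i) \<Longrightarrow> k = l"
proof (rule ext)
  fix i assume "k \<in> cfgs {..<n} d" "l \<in> cfgs {..<n} d" "\<And>i. i < n \<Longrightarrow> k i = l i"
  then show "k i = l i" by (cases "i < n") (auto simp: cfgsD0)
qed

context
  fixes L :: "nat \<Rightarrow> 'v" and n :: nat
  assumes inj: "inj_on L {..<n}"
begin

lemma inv_L[simp]: "i < n \<Longrightarrow> the_inv_into {..<n} L (L i) = i"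
  using inj by (simp add: the_inv_into_f_f)

lemma get_cfgs: "k \<in> cfgs C d \<Longrightarrow> L ` {..<n} \<subseteq> C \<Longrightarrow> get L n k \<in> cfgs {..<n} d"
  unfolding get_def cfgs_def by auto

lemma put_cfgs: "k \<in> cfgs C d \<Longrightarrow> j \<in> cfgs {..<n} d \<Longrightarrow> L ` {..<n} \<subseteq> C \<Longrightarrow> put L n k j \<in> cfgs C d"
  unfolding put_def cfgs_def by auto

lemma get_put: "j \<in> cfgs {..<n} d \<Longrightarrow> get L n (put L n k j) = j"
  unfolding get_def put_def cfgs_def by auto

lemma put_put[simp]: "put L n (put L n k j) l = put L n k l"
  unfolding put_def by auto

lemma put_get[simp]: "put L n k (get L n k) = k"
proof (rule ext)
  fix a show "put L n k (get L n k) a = k a"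
  proof (cases "a \<in> L ` {..<n}")
    case True
    then obtain i where "i < n" "a = L i" by auto
    then show ?thesis unfolding put_def get_def by simp
  qed (simp add: put_def)
qed

lemma put_L[simp]: "i < n \<Longrightarrow> put L n k j (L i) = j i"
  unfolding put_def by auto

lemma put_out[simp]: "a \<notin> L ` {..<n} \<Longrightarrow> put L n k j a = k a"
  unfolding put_def by auto

lemma put_upd: "a \<notin> L ` {..<n} \<Longrightarrow> put L n (k(a := r)) j = (put L n k j)(a := r)"
  unfolding put_def by (rule ext) auto

lemma get_upd: "a \<notin> L ` {..<n} \<Longrightarrow> get L n (k(a := r)) = get L n k"
  unfolding get_def by (rule ext) auto

lemma op_on_alt: "op_on d C L n A \<psi> k = (if k \<in> cfgs C d then
   (\<Sum>j\<in>cfgs {..<n} d. A (get L n k) j * \<psi> (put L n k j)) else 0)"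
  unfolding op_on_def get_def put_def by simp

end


lemma int_eq_mod_iff: "0 \<le> (x::int) \<Longrightarrow> x < m \<Longrightarrow> (x = y mod m) = (m dvd x - y)"
proof -
  assume "0 \<le> x" "x < m"
  then have "x mod m = x" by simp
  then have "(x = y mod m) = (x mod m = y mod m)" by simp
  then show ?thesis by (simp add: mod_eq_dvd_iff)
qed

lemma prod_ind: "finite A \<Longrightarrow> (\<Prod>l\<in>A. (if P l then 1 else 0 :: complex)) = (if \<forall>l\<in>A. P l then 1 else 0)"
proof (cases "\<forall>l\<in>A. P l")
  case True
  then show ?thesis by simp
next
  case False
  assume "finite A"
  then obtain l where "l \<in> A" "\<not> P l" using False by blast
  then show ?thesis using \<open>finite A\<close> False by (subst prod_zero) auto
qed

lemma sum_single: "finite A \<Longrightarrow> z \<in> A \<Longrightarrow> (\<And>x. x \<in> A \<Longrightarrow> x \<noteq> z \<Longrightarrow> f x = 0) \<Longrightarrow> sum f A = f z"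
proof -
  assume A: "finite A" "z \<in> A" and z: "\<And>x. x \<in> A \<Longrightarrow> x \<noteq> z \<Longrightarrow> f x = 0"
  have "sum f A = f z + sum f (A - {z})" by (rule sum.remove[OF A])
  moreover have "sum f (A - {z}) = 0" by (rule sum.neutral) (use z in auto)
  ultimately show ?thesis by simp
qed

lemma op_at_alt: "op_at d C a M \<psi> k = (if k \<in> cfgs C d then (\<Sum>r<d. M (k a) r * \<psi> (k(a := r))) else 0)"
proof -
  have cf: "cfgs {a} d = (\<lambda>r. (\<lambda>_. 0)(a := r)) ` {..<d}"
  proof
    show "cfgs {a} d \<subseteq> (\<lambda>r. (\<lambda>_. 0)(a := r)) ` {..<d}"
    proof
      fix j assume j: "j \<in> cfgs {a} d"
      then have "j = (\<lambda>_. 0)(a := j a)" by (auto intro!: ext simp: cfgsD0)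
      moreover have "j a < d" using j by (simp add: cfgsD)
      ultimately show "j \<in> (\<lambda>r. (\<lambda>_. 0)(a := r)) ` {..<d}" by blast
    qed
  qed (auto simp: cfgs_def)
  have inj: "inj_on (\<lambda>r. ((\<lambda>_. 0)(a := r)) :: 'a \<Rightarrow> nat) {..<d}"
  proof (rule inj_onI)
    fix x y assume "((\<lambda>_. 0)(a := x) :: 'a \<Rightarrow> nat) = (\<lambda>_. 0)(a := y)"
    then have "((\<lambda>_. 0)(a := x) :: 'a \<Rightarrow> nat) a = ((\<lambda>_. 0)(a := y)) a" by simp
    then show "x = y" by simp
  qed
  have ov: "override_on k ((\<lambda>_. 0)(a := r)) {a} = k(a := r)" for r
    by (rule ext) (simp add: override_on_def)
  show ?thesis unfolding op_at_def op_sites_def cf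
    by (simp add: sum.reindex[OF inj] ov)
qed

lemma op_at_X: "d > 0 \<Longrightarrow> a \<in> C \<Longrightarrow> k \<in> cfgs C d \<Longrightarrow>
   op_at d C a (Xm d) \<psi> k = \<psi> (k(a := (k a + 1) mod d))"
proof -
  assume d: "d > 0" and a: "a \<in> C" and k: "k \<in> cfgs C d"
  have ka: "k a < d" using k a by (simp add: cfgsD)
  have eq: "Xm d (k a) r = (if r = (k a + 1) mod d then 1 else 0)" if r: "r < d" for r
  proof -
    have "(int (k a) = (int r - 1) mod int d) = (int d dvd int (k a) - (int r - 1))"
      by (rule int_eq_mod_iff) (use ka in auto)
    also have "\<dots> = (int d dvd int r - (int (k a) + 1))"
    proof -
      have "int r - (int (k a) + 1) = - (int (k a) - (int r - 1))" by simp
      then show ?thesis by (simp only: dvd_minus_iff)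
    qed
    also have "\<dots> = (int r = (int (k a) + 1) mod int d)"
      by (rule int_eq_mod_iff[symmetric]) (use r in auto)
    also have "\<dots> = (r = (k a + 1) mod d)"
    proof -
      have "(int (k a) + 1) mod int d = int ((k a + 1) mod d)" by (simp add: zmod_int add.commute)
      then show ?thesis by simp
    qed
    finally show ?thesis unfolding Xm_def Xpow_def by simp
  qed
  have "op_at d C a (Xm d) \<psi> k = (\<Sum>r<d. (if r = (k a + 1) mod d then 1 else 0) * \<psi> (k(a := r)))"
    unfolding op_at_alt using k by (simp add: eq)
  also have "\<dots> = \<psi> (k(a := (k a + 1) mod d))"
    by (subst sum_single[where z = "(k a + 1) mod d"]) (use d in auto)
  finally show ?thesis .
qed

lemma op_at_Z: "d > 0 \<Longrightarrow> a \<in> C \<Longrightarrow> k \<in> cfgs C d \<Longrightarrow>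
   op_at d C a (Zpow d m) \<psi> k = qpow d (m * int (k a)) * \<psi> k"
proof -
  assume d: "d > 0" and a: "a \<in> C" and k: "k \<in> cfgs C d"
  have ka: "k a < d" using k a by (simp add: cfgsD)
  have "op_at d C a (Zpow d m) \<psi> k = (\<Sum>r<d. Zpow d m (k a) r * \<psi> (k(a := r)))"
    unfolding op_at_alt using k by simp
  also have "\<dots> = (\<Sum>r<d. (if r = k a then qpow d (m * int (k a)) * \<psi> (k(a := r)) else 0))"
    by (rule sum.cong) (auto simp: Zpow_def)
  also have "\<dots> = qpow d (m * int (k a)) * \<psi> k"
    by (subst sum_single[where z = "k a"]) (use ka in auto)
  finally show ?thesis .
qed


context
  fixes L :: "nat \<Rightarrow> 'v" and n :: nat and C :: "'v set" and d :: nat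
  assumes inj: "inj_on L {..<n}" and sub: "L ` {..<n} \<subseteq> C"
begin

lemma op_on_comp: "op_on d C L n A (op_on d C L n B \<psi>) = op_on d C L n (nmul d n A B) \<psi>"
proof (rule ext)
  fix k
  show "op_on d C L n A (op_on d C L n B \<psi>) k = op_on d C L n (nmul d n A B) \<psi> k"
  proof (cases "k \<in> cfgs C d")
    case True
    have "op_on d C L n A (op_on d C L n B \<psi>) k =
      (\<Sum>j\<in>cfgs {..<n} d. A (get L n k) j * (\<Sum>l\<in>cfgs {..<n} d. B j l * \<psi> (put L n k l)))"
      using True by (simp add: op_on_alt[OF inj] put_cfgs[OF inj _ _ sub] get_put[OF inj] put_put[OF inj]
          cong: sum.cong)
    also have "\<dots> = (\<Sum>j\<in>cfgs {..<n} d. \<Sum>l\<in>cfgs {..<n} d. A (get L n k) j * B j l * \<psi> (put L n k l))"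
      by (simp add: sum_distrib_left mult.assoc)
    also have "\<dots> = (\<Sum>l\<in>cfgs {..<n} d. \<Sum>j\<in>cfgs {..<n} d. A (get L n k) j * B j l * \<psi> (put L n k l))"
      by (rule sum.swap)
    also have "\<dots> = op_on d C L n (nmul d n A B) \<psi> k"
      using True by (simp add: op_on_alt[OF inj] nmul_def sum_distrib_right)
    finally show ?thesis .
  qed (simp add: op_on_alt[OF inj])
qed

lemma op_on_cong: "(\<And>x y. x \<in> cfgs {..<n} d \<Longrightarrow> y \<in> cfgs {..<n} d \<Longrightarrow> A x y = B x y) \<Longrightarrow>
   op_on d C L n A \<psi> = op_on d C L n B \<psi>"
  by (rule ext) (simp add: op_on_alt[OF inj] get_cfgs[OF inj _ sub] cong: sum.cong)

lemma op_on_nid: "(\<And>k. k \<notin> cfgs C d \<Longrightarrow> \<psi> k = 0) \<Longrightarrow> op_on d C L n nid \<psi> = \<psi>"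
proof (rule ext)
  fix k assume z: "\<And>k. k \<notin> cfgs C d \<Longrightarrow> \<psi> k = 0"
  show "op_on d C L n nid \<psi> k = \<psi> k"
  proof (cases "k \<in> cfgs C d")
    case True
    have "op_on d C L n nid \<psi> k = (\<Sum>j\<in>cfgs {..<n} d. nid (get L n k) j * \<psi> (put L n k j))"
      using True by (simp add: op_on_alt[OF inj])
    also have "\<dots> = nid (get L n k) (get L n k) * \<psi> (put L n k (get L n k))"
      by (rule sum_single) (auto simp: nid_def get_cfgs[OF inj True sub])
    finally show ?thesis by (simp add: nid_def put_get[OF inj])
  qed (simp add: op_on_alt[OF inj] z)
qed

lemma op_on_scale: "op_on d C L n A (\<lambda>k. c * \<psi> k) = (\<lambda>k. c * op_on d C L n A \<psi> k)"
  by (rule ext) (simp add: op_on_alt[OF inj] sum_distrib_left mult.left_commute)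

lemma op_on_zero: "k \<notin> cfgs C d \<Longrightarrow> op_on d C L n A \<psi> k = 0"
  by (simp add: op_on_alt[OF inj])

lemma op_at_op_on: "a \<in> C \<Longrightarrow> a \<notin> L ` {..<n} \<Longrightarrow>
  op_at d C a M (op_on d C L n A \<psi>) = op_on d C L n A (op_at d C a M \<psi>)"
proof (rule ext)
  fix k assume a: "a \<in> C" "a \<notin> L ` {..<n}"
  show "op_at d C a M (op_on d C L n A \<psi>) k = op_on d C L n A (op_at d C a M \<psi>) k"
  proof (cases "k \<in> cfgs C d")
    case True
    have pa: "\<And>j. put L n k j a = k a" using a by (simp add: put_out[OF inj])
    have "op_at d C a M (op_on d C L n A \<psi>) k =
       (\<Sum>r<d. M (k a) r * (\<Sum>j\<in>cfgs {..<n} d. A (get L n k) j * \<psi> ((put L n k j)(a := r))))"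
      using True a by (auto simp: op_at_alt op_on_alt[OF inj] cfgs_upd get_upd[OF inj] put_upd[OF inj]
          intro!: sum.cong)
    also have "\<dots> = (\<Sum>r<d. \<Sum>j\<in>cfgs {..<n} d. M (k a) r * A (get L n k) j * \<psi> ((put L n k j)(a := r)))"
      by (simp add: sum_distrib_left mult.assoc)
    also have "\<dots> = (\<Sum>j\<in>cfgs {..<n} d. \<Sum>r<d. M (k a) r * A (get L n k) j * \<psi> ((put L n k j)(a := r)))"
      by (rule sum.swap)
    also have "\<dots> = op_on d C L n A (op_at d C a M \<psi>) k"
      using True a by (simp add: pa op_at_alt op_on_alt[OF inj] put_cfgs[OF inj _ _ sub] sum_distrib_left
          mult.commute mult.left_commute)
    finally show ?thesis .
  qed (simp add: op_on_alt[OF inj] op_at_alt)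
qed

lemma nlocal_upd: "i < n \<Longrightarrow> nlocal n i M x (x(i := r)) = M (x i) r"
proof -
  assume i: "i < n"
  have "nlocal n i M x (x(i := r)) = (\<lambda>l. (if l = i then M else id1) (x l) ((x(i := r)) l)) i *
      (\<Prod>l\<in>{..<n} - {i}. (if l = i then M else id1) (x l) ((x(i := r)) l))"
    unfolding nlocal_def ntens_def using i by (subst prod.remove[of _ i]) auto
  also have "\<dots> = M (x i) r" by (simp add: id1_def)
  finally show ?thesis .
qed

lemma nlocal_zero: "i < n \<Longrightarrow> l < n \<Longrightarrow> l \<noteq> i \<Longrightarrow> y l \<noteq> x l \<Longrightarrow> nlocal n i M x y = 0"
  unfolding nlocal_def ntens_def by (rule prod_zero) (auto simp: id1_def intro!: bexI[of _ l])

lemma op_on_local: "i < n \<Longrightarrow> op_on d C L n (nlocal n i M) \<psi> = op_at d C (L i) M \<psi>"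
proof (rule ext)
  fix k assume i: "i < n"
  show "op_on d C L n (nlocal n i M) \<psi> k = op_at d C (L i) M \<psi> k"
  proof (cases "k \<in> cfgs C d")
    case True
    define x where "x = get L n k"
    have x: "x \<in> cfgs {..<n} d" unfolding x_def by (rule get_cfgs[OF inj True sub])
    let ?I = "(\<lambda>r. x(i := r)) ` {..<d}"
    have I: "?I \<subseteq> cfgs {..<n} d" using x i by (auto intro: cfgs_upd)
    have injr: "inj_on (\<lambda>r. x(i := r)) {..<d}"
    proof (rule inj_onI)
      fix r s assume "x(i := r) = x(i := s)"
      then have "(x(i := r)) i = (x(i := s)) i" by simp
      then show "r = s" by simp
    qed
    have pu: "put L n k (x(i := r)) = k(L i := r)" for r
    proof (rule ext)
      fix a show "put L n k (x(i := r)) a = (k(L i := r)) a"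
      proof (cases "a \<in> L ` {..<n}")
        case True
        then obtain l where l: "l < n" "a = L l" by auto
        have "L l = L i \<longleftrightarrow> l = i" using inj l i by (auto dest: inj_onD)
        then show ?thesis using l i by (auto simp: put_L[OF inj] x_def get_def)
      qed (use i in \<open>auto simp: put_out[OF inj]\<close>)
    qed
    have "op_on d C L n (nlocal n i M) \<psi> k = (\<Sum>j\<in>cfgs {..<n} d. nlocal n i M x j * \<psi> (put L n k j))"
      using True by (simp add: op_on_alt[OF inj] x_def)
    also have "\<dots> = (\<Sum>j\<in>?I. nlocal n i M x j * \<psi> (put L n k j))"
    proof (rule sum.mono_neutral_right[OF finite_cfgs I])
      show "\<forall>j\<in>cfgs {..<n} d - ?I. nlocal n i M x j * \<psi> (put L n k j) = 0"
      proof
        fix j assume j: "j \<in> cfgs {..<n} d - ?I"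
        have "\<exists>l<n. l \<noteq> i \<and> j l \<noteq> x l"
        proof (rule ccontr)
          assume "\<not> ?thesis"
          then have "j = x(i := j i)" using j x i by (intro cfgs_eqI[of _ n d]) (auto intro: cfgs_upd cfgsD)
          moreover have "j i < d" using j i by (auto intro: cfgsD)
          ultimately show False using j by blast
        qed
        then show "nlocal n i M x j * \<psi> (put L n k j) = 0" using nlocal_zero i by auto
      qed
    qed simp
    also have "\<dots> = (\<Sum>r<d. M (x i) r * \<psi> (k(L i := r)))"
      by (simp add: sum.reindex[OF injr] nlocal_upd[OF i] pu)
    also have "\<dots> = op_at d C (L i) M \<psi> k"
      using True i by (simp add: op_at_alt x_def get_def)
    finally show ?thesis .
  qed (simp add: op_on_alt[OF inj] op_at_alt)
qed

end


locale thm2 =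
  fixes d n :: nat
    and C CI CM CO :: "'v set"
    and E :: "'v set set"
    and Iq Oq :: "nat \<Rightarrow> 'v"
    and u :: "'v \<Rightarrow> nat \<Rightarrow> nat \<Rightarrow> complex"
    and s :: "'v \<Rightarrow> nat"
    and U :: "(nat \<Rightarrow> nat) \<Rightarrow> (nat \<Rightarrow> nat) \<Rightarrow> complex"
    and lx lz :: "nat \<Rightarrow> int"
    and Phi :: "('v \<Rightarrow> nat) \<Rightarrow> complex"
  assumes d: "d \<ge> 2"
    and finC: "finite C"
    and dC: "C = CI \<union> CM \<union> CO" and dIM: "CI \<inter> CM = {}" and dIO: "CI \<inter> CO = {}" and dMO: "CM \<inter> CO = {}"
    and injI: "inj_on Iq {..<n}" and CI: "CI = Iq ` {..<n}"
    and injO: "inj_on Oq {..<n}" and CO: "CO = Oq ` {..<n}"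
    and U_unit: "nunitary d n U"
    and Phi_def: "Phi = op_sites d C CM (\<lambda>a. proj1 (ucol (u a) (s a))) (cluster_state d C E)"
    and nonzero: "\<exists>k. Phi k \<noteq> 0"
    and stabX: "\<forall>i<n. op_at d C (Iq i) (Xm d)
                  (op_on d C Oq n (nmul d n (nmul d n U (nlocal n i (Xm d))) (nadj U)) Phi)
                = (\<lambda>k. qpow d (- lx i) * Phi k)"
    and stabZ: "\<forall>i<n. op_at d C (Iq i) (Zdag d)
                  (op_on d C Oq n (nmul d n (nmul d n U (nlocal n i (Zm d))) (nadj U)) Phi)
                = (\<lambda>k. qpow d (- lz i) * Phi k)"
begin

lemma d0: "d > 0" using d by simp

lemma subO: "Oq ` {..<n} \<subseteq> C" using dC CO by auto
lemma subI: "Iq ` {..<n} \<subseteq> C" using dC CI by auto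

lemma IO_neq: "i < n \<Longrightarrow> j < n \<Longrightarrow> Iq i \<noteq> Oq j"
  using dIO CI CO by auto

lemma OI_neq: "i < n \<Longrightarrow> j < n \<Longrightarrow> Oq j \<noteq> Iq i"
  using dIO CI CO by auto

lemma II_neq: "i < n \<Longrightarrow> j < n \<Longrightarrow> Iq i = Iq j \<longleftrightarrow> i = j"
  using injI by (auto dest: inj_onD)
lemma OO_neq: "i < n \<Longrightarrow> j < n \<Longrightarrow> Oq i = Oq j \<longleftrightarrow> i = j"
  using injO by (auto dest: inj_onD)

lemma IinC: "i < n \<Longrightarrow> Iq i \<in> C" using subI by auto
lemma OinC: "i < n \<Longrightarrow> Oq i \<in> C" using subO by auto
lemma I_notO: "i < n \<Longrightarrow> Iq i \<notin> Oq ` {..<n}" using IO_neq by auto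

lemma Phi_zero: "k \<notin> cfgs C d \<Longrightarrow> Phi k = 0"
  unfolding Phi_def op_sites_def by simp

definition Psi where "Psi = op_on d C Oq n (nadj U) Phi"

lemma Psi_zero: "k \<notin> cfgs C d \<Longrightarrow> Psi k = 0"
  unfolding Psi_def by (rule op_on_zero[OF injO subO])

lemma inv_left: "op_on d C Oq n (nadj U) (op_on d C Oq n U \<psi>) = \<psi>" if z: "\<And>k. k \<notin> cfgs C d \<Longrightarrow> \<psi> k = 0" for \<psi>
proof -
  have "op_on d C Oq n (nadj U) (op_on d C Oq n U \<psi>) = op_on d C Oq n (nmul d n (nadj U) U) \<psi>"
    by (rule op_on_comp[OF injO subO])
  also have "\<dots> = op_on d C Oq n nid \<psi>"
    by (rule op_on_cong[OF injO subO]) (use U_unit in \<open>auto simp: nunitary_def\<close>)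
  also have "\<dots> = \<psi>" by (rule op_on_nid[OF injO subO z])
  finally show ?thesis .
qed

lemma Phi_U: "op_on d C Oq n U Psi = Phi"
proof -
  have "op_on d C Oq n U Psi = op_on d C Oq n (nmul d n U (nadj U)) Phi"
    unfolding Psi_def by (rule op_on_comp[OF injO subO])
  also have "\<dots> = op_on d C Oq n nid Phi"
    by (rule op_on_cong[OF injO subO]) (use U_unit in \<open>auto simp: nunitary_def\<close>)
  also have "\<dots> = Phi" by (rule op_on_nid[OF injO subO Phi_zero])
  finally show ?thesis .
qed

lemma conj_stab:
  assumes i: "i < n" and a: "a = Iq i"
    and st: "op_at d C a M (op_on d C Oq n (nmul d n (nmul d n U (nlocal n i N)) (nadj U)) Phi)
               = (\<lambda>k. c * Phi k)"
  shows "op_at d C a M (op_at d C (Oq i) N Psi) = (\<lambda>k. c * Psi k)"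
proof -
  have "op_on d C Oq n (nmul d n (nmul d n U (nlocal n i N)) (nadj U)) Phi
      = op_on d C Oq n (nmul d n U (nlocal n i N)) Psi"
    unfolding Psi_def by (rule op_on_comp[OF injO subO, symmetric])
  also have "\<dots> = op_on d C Oq n U (op_on d C Oq n (nlocal n i N) Psi)"
    by (rule op_on_comp[OF injO subO, symmetric])
  finally have "op_on d C Oq n (nmul d n (nmul d n U (nlocal n i N)) (nadj U)) Phi
      = op_on d C Oq n U (op_on d C Oq n (nlocal n i N) Psi)" .
  then have "op_on d C Oq n U (op_at d C a M (op_on d C Oq n (nlocal n i N) Psi)) = (\<lambda>k. c * Phi k)"
    using st a i by (simp add: op_at_op_on[OF injO subO] IinC I_notO)
  then have "op_on d C Oq n (nadj U) (op_on d C Oq n U (op_at d C a M (op_on d C Oq n (nlocal n i N) Psi)))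
     = op_on d C Oq n (nadj U) (\<lambda>k. c * Phi k)" by simp
  then have "op_at d C a M (op_on d C Oq n (nlocal n i N) Psi) = (\<lambda>k. c * Psi k)"
    by (subst (asm) inv_left) (auto simp: op_at_alt op_on_scale[OF injO subO] Psi_def)
  then show ?thesis by (simp add: op_on_local[OF injO subO i])
qed

lemma PsiX: "i < n \<Longrightarrow> k \<in> cfgs C d \<Longrightarrow>
  Psi (k(Iq i := (k (Iq i) + 1) mod d, Oq i := (k (Oq i) + 1) mod d)) = qpow d (- lx i) * Psi k"
proof -
  assume i: "i < n" and k: "k \<in> cfgs C d"
  have h: "op_at d C (Iq i) (Xm d) (op_at d C (Oq i) (Xm d) Psi) = (\<lambda>k. qpow d (- lx i) * Psi k)"
    by (rule conj_stab[OF i refl]) (use stabX i in auto)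
  have k1: "k(Iq i := (k (Iq i) + 1) mod d) \<in> cfgs C d"
    by (rule cfgs_upd[OF k IinC[OF i]]) (use d0 in auto)
  have "op_at d C (Iq i) (Xm d) (op_at d C (Oq i) (Xm d) Psi) k
     = op_at d C (Oq i) (Xm d) Psi (k(Iq i := (k (Iq i) + 1) mod d))"
    by (rule op_at_X[OF d0 IinC[OF i] k])
  also have "\<dots> = Psi ((k(Iq i := (k (Iq i) + 1) mod d))(Oq i := ((k(Iq i := (k (Iq i) + 1) mod d)) (Oq i) + 1) mod d))"
    by (rule op_at_X[OF d0 OinC[OF i] k1])
  also have "\<dots> = Psi (k(Iq i := (k (Iq i) + 1) mod d, Oq i := (k (Oq i) + 1) mod d))"
    using IO_neq[OF i i] by simp
  finally have "op_at d C (Iq i) (Xm d) (op_at d C (Oq i) (Xm d) Psi) k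
     = Psi (k(Iq i := (k (Iq i) + 1) mod d, Oq i := (k (Oq i) + 1) mod d))" .
  then show ?thesis using h by (metis)
qed

lemma PsiZ: "i < n \<Longrightarrow> k \<in> cfgs C d \<Longrightarrow>
  qpow d (- int (k (Iq i))) * qpow d (int (k (Oq i))) * Psi k = qpow d (- lz i) * Psi k"
proof -
  assume i: "i < n" and k: "k \<in> cfgs C d"
  have h: "op_at d C (Iq i) (Zpow d (-1)) (op_at d C (Oq i) (Zpow d 1) Psi) = (\<lambda>k. qpow d (- lz i) * Psi k)"
    by (rule conj_stab[OF i refl]) (use stabZ i in \<open>auto simp: Zdag_def Zm_def\<close>)
  have "op_at d C (Iq i) (Zpow d (-1)) (op_at d C (Oq i) (Zpow d 1) Psi) k
     = qpow d (- int (k (Iq i))) * qpow d (int (k (Oq i))) * Psi k"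
    by (simp add: op_at_Z[OF d0 IinC[OF i] k] op_at_Z[OF d0 OinC[OF i] k])
  then show ?thesis using h by (metis)
qed

end


lemma mod_shift_iff: "((a::int) - b) mod m = c mod m \<longleftrightarrow> a mod m = (b + c) mod m"
proof -
  have "((a - b) mod m = c mod m) = (m dvd (a - b) - c)" by (simp add: mod_eq_dvd_iff)
  also have "\<dots> = (m dvd a - (b + c))" by (simp add: algebra_simps)
  also have "\<dots> = (a mod m = (b + c) mod m)" by (simp add: mod_eq_dvd_iff)
  finally show ?thesis .
qed

context thm2
begin

lemma Psi_step:
  assumes i: "i < n" and k: "k \<in> cfgs C d"
  shows "Psi k = qpow d (- lx i * int (k (Iq i))) *
     Psi (k(Iq i := 0, Oq i := nat ((int (k (Oq i)) - int (k (Iq i))) mod int d)))"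
proof -
  define o0 where "o0 = nat ((int (k (Oq i)) - int (k (Iq i))) mod int d)"
  define k0 where "k0 = k(Iq i := 0, Oq i := o0)"
  have o0: "o0 < d" unfolding o0_def using d0
    by (simp add: nat_less_iff)
  have io: "Iq i \<noteq> Oq i" using IO_neq[OF i i] .
  have k0c: "k0 \<in> cfgs C d" unfolding k0_def
    by (intro cfgs_upd k IinC[OF i] OinC[OF i] o0) (use d0 in auto)
  define km where "km m = k0(Iq i := m mod d, Oq i := (o0 + m) mod d)" for m
  have kmc: "km m \<in> cfgs C d" for m unfolding km_def
    by (intro cfgs_upd k0c IinC[OF i] OinC[OF i]) (use d0 in auto)
  have claim: "Psi (km m) = qpow d (- lx i * int m) * Psi k0" for m
  proof (induction m)
    case 0
    have "km 0 = k0" unfolding km_def k0_def using o0 io by (auto intro!: ext)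
    then show ?case by simp
  next
    case (Suc m)
    have kI: "km m (Iq i) = m mod d" and kO: "km m (Oq i) = (o0 + m) mod d"
      unfolding km_def using io by auto
    have "(km m)(Iq i := (km m (Iq i) + 1) mod d, Oq i := (km m (Oq i) + 1) mod d) = km (Suc m)"
      unfolding kI kO km_def by (auto intro!: ext simp: mod_Suc_eq)
    then have "Psi (km (Suc m)) = qpow d (- lx i) * Psi (km m)"
      using PsiX[OF i kmc[of m]] by simp
    also have "\<dots> = qpow d (- lx i * int (Suc m)) * Psi k0"
      using Suc by (simp add: qpow_add[symmetric] algebra_simps)
    finally show ?case .
  qed
  have kIlt: "k (Iq i) < d" and kOlt: "k (Oq i) < d" using k IinC[OF i] OinC[OF i] by (auto intro: cfgsD)
  have "int ((o0 + k (Iq i)) mod d) = (int o0 + int (k (Iq i))) mod int d" by (simp add: zmod_int)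
  also have "\<dots> = ((int (k (Oq i)) - int (k (Iq i))) mod int d + int (k (Iq i))) mod int d"
    unfolding o0_def using d0 by simp
  also have "\<dots> = int (k (Oq i))" using kOlt by (simp add: mod_add_left_eq)
  finally have "(o0 + k (Iq i)) mod d = k (Oq i)" by linarith
  then have "km (k (Iq i)) = k" unfolding km_def k0_def using kIlt io by (auto intro!: ext)
  then have "Psi k = qpow d (- lx i * int (k (Iq i))) * Psi k0" using claim by metis
  then show ?thesis unfolding k0_def o0_def .
qed

primrec red :: "nat \<Rightarrow> ('v \<Rightarrow> nat) \<Rightarrow> 'v \<Rightarrow> nat" where
  "red 0 k = k"
| "red (Suc m) k = (red m k)(Iq m := 0, Oq m := nat ((int (k (Oq m)) - int (k (Iq m))) mod int d))"

lemma red_hi: "m \<le> i \<Longrightarrow> i < n \<Longrightarrow> red m k (Iq i) = k (Iq i) \<and> red m k (Oq i) = k (Oq i)"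
  by (induction m) (auto simp: IO_neq OI_neq II_neq OO_neq)

lemma red_lo: "i < m \<Longrightarrow> m \<le> n \<Longrightarrow> red m k (Iq i) = 0 \<and>
    red m k (Oq i) = nat ((int (k (Oq i)) - int (k (Iq i))) mod int d)"
proof (induction m)
  case (Suc m)
  then show ?case
    by (cases "i = m") (auto simp: IO_neq OI_neq II_neq OO_neq)
qed simp

lemma red_other: "a \<notin> Iq ` {..<n} \<Longrightarrow> a \<notin> Oq ` {..<n} \<Longrightarrow> m \<le> n \<Longrightarrow> red m k a = k a"
  by (induction m) auto

lemma red_cfgs: "m \<le> n \<Longrightarrow> k \<in> cfgs C d \<Longrightarrow> red m k \<in> cfgs C d"
proof (induction m)
  case (Suc m)
  have m: "m < n" using Suc by simp
  have "(red m k)(Iq m := 0) \<in> cfgs C d"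
    by (rule cfgs_upd) (use Suc m d0 IinC in auto)
  then show ?case unfolding red.simps
    by (rule cfgs_upd) (use Suc m d0 OinC in \<open>auto simp: nat_less_iff\<close>)
qed simp

lemma Psi_red: "m \<le> n \<Longrightarrow> k \<in> cfgs C d \<Longrightarrow>
   Psi k = (\<Prod>i<m. qpow d (- lx i * int (k (Iq i)))) * Psi (red m k)"
proof (induction m)
  case (Suc m)
  have m: "m < n" using Suc by simp
  have h: "red m k (Iq m) = k (Iq m)" "red m k (Oq m) = k (Oq m)" using red_hi[OF le_refl m] by auto
  have rc: "red m k \<in> cfgs C d" using red_cfgs Suc by simp
  have "Psi (red m k) = qpow d (- lx m * int (red m k (Iq m))) * Psi ((red m k)(Iq m := 0,
     Oq m := nat ((int (red m k (Oq m)) - int (red m k (Iq m))) mod int d)))"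
    by (rule Psi_step[OF m rc])
  then have "Psi (red m k) = qpow d (- lx m * int (k (Iq m))) * Psi (red (Suc m) k)"
    by (simp only: h red.simps)
  moreover have "Psi k = (\<Prod>i<m. qpow d (- lx i * int (k (Iq i)))) * Psi (red m k)"
    using Suc by simp
  ultimately show ?case unfolding prod.lessThan_Suc by (simp only: ac_simps)
qed simp

definition zk :: "('v \<Rightarrow> nat) \<Rightarrow> 'v \<Rightarrow> nat" where
  "zk k = (\<lambda>a. if a \<in> Iq ` {..<n} then 0 else if a \<in> Oq ` {..<n} then
      nat ((- lz (the_inv_into {..<n} Oq a)) mod int d) else k a)"

lemma Psi_form: "k \<in> cfgs C d \<Longrightarrow> Psi k = (if \<forall>i<n. int (k (Oq i)) = (int (k (Iq i)) - lz i) mod int d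
   then (\<Prod>i<n. qpow d (- lx i * int (k (Iq i)))) * Psi (zk k) else 0)"
proof -
  assume k: "k \<in> cfgs C d"
  have P: "Psi k = (\<Prod>i<n. qpow d (- lx i * int (k (Iq i)))) * Psi (red n k)"
    by (rule Psi_red[OF le_refl k])
  have rc: "red n k \<in> cfgs C d" by (rule red_cfgs[OF le_refl k])
  show ?thesis
  proof (cases "\<forall>i<n. int (k (Oq i)) = (int (k (Iq i)) - lz i) mod int d")
    case True
    have "red n k = zk k"
    proof (rule ext)
      fix a
      show "red n k a = zk k a"
      proof (cases "a \<in> Iq ` {..<n}")
        case True
        then show ?thesis using red_lo by (auto simp: zk_def)
      next
        case nI: False
        show ?thesis
        proof (cases "a \<in> Oq ` {..<n}")
          case aO: True
          then obtain i where i: "i < n" "a = Oq i" by auto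
          have kOlt: "k (Oq i) < d" using k OinC[OF i(1)] by (auto intro: cfgsD)
          have "int (k (Oq i)) mod int d = (int (k (Iq i)) + - lz i) mod int d"
            using True i kOlt by simp
          then have "(int (k (Oq i)) - int (k (Iq i))) mod int d = (- lz i) mod int d"
            by (simp only: mod_shift_iff)
          then show ?thesis using nI aO i red_lo[OF i(1) le_refl, of k] injO
            by (simp add: zk_def the_inv_into_f_f)
        qed (use nI red_other in \<open>auto simp: zk_def\<close>)
      qed
    qed
    then show ?thesis using True P by simp
  next
    case False
    then obtain i where i: "i < n" and ne: "int (k (Oq i)) \<noteq> (int (k (Iq i)) - lz i) mod int d" by auto
    have "Psi (red n k) = 0"
    proof (rule ccontr)
      assume nz: "Psi (red n k) \<noteq> 0"
      have "qpow d (- int (red n k (Iq i))) * qpow d (int (red n k (Oq i))) = qpow d (- lz i)"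
        using PsiZ[OF i rc] nz by simp
      then have "qpow d (int (red n k (Oq i))) = qpow d (- lz i)" using red_lo[OF i le_refl] by simp
      then have "int (red n k (Oq i)) mod int d = (- lz i) mod int d" using qpow_eq_iff[OF d0] by blast
      then have "(int (k (Oq i)) - int (k (Iq i))) mod int d = (- lz i) mod int d"
        using red_lo[OF i le_refl, of k] d0 by simp
      then have "int (k (Oq i)) mod int d = (int (k (Iq i)) + - lz i) mod int d"
        by (simp only: mod_shift_iff)
      moreover have "k (Oq i) < d" using k OinC[OF i] by (auto intro: cfgsD)
      ultimately show False using ne by simp
    qed
    then have "Psi k = 0" using P by simp
    then show ?thesis unfolding if_not_P[OF False] .
  qed
qed

end


context thm2
begin

definition Um :: "('v \<Rightarrow> nat) \<Rightarrow> complex" where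
  "Um k = (\<Prod>a\<in>CM. u a (k a) (s a))"
definition sh :: "('v \<Rightarrow> nat) \<Rightarrow> nat \<Rightarrow> nat" where
  "sh k = (\<lambda>i. if i < n then nat ((int (k (Iq i)) - lz i) mod int d) else 0)"
definition R :: "('v \<Rightarrow> nat) \<Rightarrow> complex" where
  "R k = (\<Sum>j\<in>cfgs CM d. (\<Prod>a\<in>CM. cnj (u a (j a) (s a))) * cluster_state d C E (override_on k j CM))"

lemma finCM: "finite CM" using finC dC by (auto intro: finite_subset)

lemma Phi_fact: "k \<in> cfgs C d \<Longrightarrow> Phi k = Um k * R k"
  unfolding Phi_def op_sites_def Um_def R_def proj1_def ucol_def
  by (simp add: prod.distrib sum_distrib_left mult.assoc)

lemma R_cong: "(\<And>a. a \<notin> CM \<Longrightarrow> k a = k' a) \<Longrightarrow> R k = R k'"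
proof -
  assume h: "\<And>a. a \<notin> CM \<Longrightarrow> k a = k' a"
  have "override_on k j CM = override_on k' j CM" for j
    by (rule ext) (simp add: override_on_def h)
  then show ?thesis unfolding R_def by simp
qed

definition z0 where "z0 = zk (\<lambda>_. 0)"
definition alpha where
  "alpha = (\<Sum>l\<in>cfgs {..<n} d. nadj U (get Oq n z0) l * R (put Oq n z0 l))"

lemma zk_cfgs: "k \<in> cfgs C d \<Longrightarrow> zk k \<in> cfgs C d"
proof (rule cfgsI)
  fix a assume k: "k \<in> cfgs C d"
  show "a \<in> C \<Longrightarrow> zk k a < d" using k d0 by (auto simp: zk_def nat_less_iff intro: cfgsD)
  show "a \<notin> C \<Longrightarrow> zk k a = 0" using k subI subO by (auto simp: zk_def intro: cfgsD0)
qed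

lemma get_zk: "get Oq n (zk k) = get Oq n z0"
  unfolding get_def z0_def zk_def by (rule ext) (auto simp: IO_neq OI_neq)

lemma Psi_zk: "k \<in> cfgs C d \<Longrightarrow> Psi (zk k) = Um k * alpha"
proof -
  assume k: "k \<in> cfgs C d"
  have zc: "zk k \<in> cfgs C d" by (rule zk_cfgs[OF k])
  have "Psi (zk k) = (\<Sum>l\<in>cfgs {..<n} d. nadj U (get Oq n z0) l * Phi (put Oq n (zk k) l))"
    unfolding Psi_def using zc by (simp add: op_on_alt[OF injO] get_zk)
  also have "\<dots> = (\<Sum>l\<in>cfgs {..<n} d. nadj U (get Oq n z0) l * (Um k * R (put Oq n z0 l)))"
  proof (rule sum.cong[OF refl])
    fix l assume l: "l \<in> cfgs {..<n} d"
    have pc: "put Oq n (zk k) l \<in> cfgs C d" by (rule put_cfgs[OF injO zc l subO])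
    have "Um (put Oq n (zk k) l) = Um k" unfolding Um_def
    proof (rule prod.cong[OF refl])
      fix a assume a: "a \<in> CM"
      then have "a \<notin> Oq ` {..<n}" "a \<notin> Iq ` {..<n}" using dMO dIM CO CI by auto
      then show "u a (put Oq n (zk k) l a) (s a) = u a (k a) (s a)"
        by (simp add: put_out[OF injO] zk_def)
    qed
    moreover have "R (put Oq n (zk k) l) = R (put Oq n z0 l)"
    proof (rule R_cong)
      fix a assume a: "a \<notin> CM"
      show "put Oq n (zk k) l a = put Oq n z0 l a"
      proof (cases "a \<in> Oq ` {..<n}")
        case False
        then show ?thesis using a k dC CI CO by (auto simp: put_out[OF injO] zk_def z0_def intro: cfgsD0)
      qed (auto simp: put_def)
    qed
    ultimately show "nadj U (get Oq n z0) l * Phi (put Oq n (zk k) l) =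
        nadj U (get Oq n z0) l * (Um k * R (put Oq n z0 l))"
      using Phi_fact[OF pc] by simp
  qed
  also have "\<dots> = Um k * alpha" unfolding alpha_def by (simp add: sum_distrib_left ac_simps)
  finally show ?thesis .
qed

lemma sh_cfgs: "sh k \<in> cfgs {..<n} d"
  unfolding sh_def using d0 by (intro cfgsI) (auto simp: nat_less_iff)

lemma Phi_form: "k \<in> cfgs C d \<Longrightarrow>
  Phi k = U (get Oq n k) (sh k) * (\<Prod>i<n. qpow d (- lx i * int (k (Iq i)))) * (Um k * alpha)"
proof -
  assume k: "k \<in> cfgs C d"
  have "Phi k = op_on d C Oq n U Psi k" using Phi_U by simp
  also have "\<dots> = (\<Sum>l\<in>cfgs {..<n} d. U (get Oq n k) l * Psi (put Oq n k l))"
    using k by (simp add: op_on_alt[OF injO])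
  also have "\<dots> = U (get Oq n k) (sh k) * Psi (put Oq n k (sh k))"
  proof (rule sum_single[OF _ sh_cfgs])
    fix l assume l: "l \<in> cfgs {..<n} d" and ne: "l \<noteq> sh k"
    have pc: "put Oq n k l \<in> cfgs C d" by (rule put_cfgs[OF injO k l subO])
    have nc: "\<not> (\<forall>i<n. int (put Oq n k l (Oq i)) = (int (put Oq n k l (Iq i)) - lz i) mod int d)"
    proof
      assume h: "\<forall>i<n. int (put Oq n k l (Oq i)) = (int (put Oq n k l (Iq i)) - lz i) mod int d"
      have "l = sh k"
      proof (rule cfgs_eqI[OF l sh_cfgs])
        fix i assume i: "i < n"
        then have "int (l i) = (int (k (Iq i)) - lz i) mod int d"
          using h I_notO[OF i] by (simp add: put_out[OF injO] put_L[OF injO])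
        then show "l i = sh k i" unfolding sh_def using i by simp
      qed
      then show False using ne by simp
    qed
    have "Psi (put Oq n k l) = 0" using Psi_form[OF pc] unfolding if_not_P[OF nc] .
    then show "U (get Oq n k) l * Psi (put Oq n k l) = 0" by simp
  qed simp
  also have "\<dots> = U (get Oq n k) (sh k) * ((\<Prod>i<n. qpow d (- lx i * int (k (Iq i)))) * Psi (zk k))"
  proof -
    have pc: "put Oq n k (sh k) \<in> cfgs C d" by (rule put_cfgs[OF injO k sh_cfgs subO])
    have c: "\<forall>i<n. int (put Oq n k (sh k) (Oq i)) = (int (put Oq n k (sh k) (Iq i)) - lz i) mod int d"
      using d0 by (simp add: put_out[OF injO] put_L[OF injO] I_notO sh_def)
    have pI: "\<And>i. i < n \<Longrightarrow> put Oq n k (sh k) (Iq i) = k (Iq i)" by (simp add: put_out[OF injO] I_notO)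
    have zz: "zk (put Oq n k (sh k)) = zk k"
      unfolding zk_def by (rule ext) (auto simp: put_out[OF injO])
    show ?thesis using Psi_form[OF pc] c pI zz by simp
  qed
  finally show ?thesis using Psi_zk[OF k] by (simp add: ac_simps)
qed

lemma alpha_nz: "alpha \<noteq> 0"
proof
  assume a: "alpha = 0"
  obtain k where k: "Phi k \<noteq> 0" using nonzero by blast
  then have "k \<in> cfgs C d" using Phi_zero by blast
  then show False using Phi_form k a by simp
qed

end


lemma restr_cfgs: "k \<in> cfgs C d \<Longrightarrow> A \<subseteq> C \<Longrightarrow> restr A k \<in> cfgs A d"
  unfolding restr_def cfgs_def by auto

lemma op_sites_mult: "(\<And>k j. f (override_on k j A) = f k) \<Longrightarrow>
  op_sites d C A M (\<lambda>k. f k * \<chi> k) = (\<lambda>k. f k * op_sites d C A M \<chi> k)"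
  unfolding op_sites_def by (rule ext) (simp add: sum_distrib_left ac_simps)

context thm2
begin

definition w :: complex where "w = 1 / complex_of_real (sqrt (real d))"
lemma w_nz: "w \<noteq> 0" unfolding w_def using d0 by simp
lemma xvec0: "xvec d 0 r = w" unfolding xvec_def w_def by simp

definition gam where "gam = w ^ card (CM \<union> CO) / w ^ card C"
lemma gam_nz: "gam \<noteq> 0" unfolding gam_def using w_nz by simp

lemma CI_sub: "CI \<subseteq> C" and MO_sub: "CM \<union> CO \<subseteq> C" and CM_sub: "CM \<subseteq> C" using dC by auto

lemma get_restr: "get Iq n (restr CI k) = get Iq n k"
  unfolding get_def restr_def using CI by (auto intro!: ext)

lemma ST: "cluster_gen d C E (tens d CI (emb d Iq n \<psi>) (CM \<union> CO) (plus_state d (CM \<union> CO)))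
    = (\<lambda>k. (gam * \<psi> (get Iq n k)) * cluster_state d C E k)"
proof (rule ext)
  fix k
  show "cluster_gen d C E (tens d CI (emb d Iq n \<psi>) (CM \<union> CO) (plus_state d (CM \<union> CO))) k
    = (gam * \<psi> (get Iq n k)) * cluster_state d C E k"
  proof (cases "k \<in> cfgs C d")
    case True
    define ph where "ph = (\<Prod>e\<in>E. qpow d (\<Prod>a\<in>e. int (k a)))"
    have CC: "CI \<union> (CM \<union> CO) = C" using dC by auto
    have r1: "restr CI k \<in> cfgs (Iq ` {..<n}) d" using restr_cfgs[OF True CI_sub] CI by simp
    have r2: "restr (CM \<union> CO) k \<in> cfgs (CM \<union> CO) d" using restr_cfgs[OF True MO_sub] .
    have "emb d Iq n \<psi> (restr CI k) = \<psi> (get Iq n k)"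
      unfolding emb_def using r1 get_restr by (simp add: get_def)
    moreover have "plus_state d (CM \<union> CO) (restr (CM \<union> CO) k) = w ^ card (CM \<union> CO)"
      unfolding plus_state_def prod_state_def using r2 by (simp add: xvec0)
    moreover have "plus_state d C k = w ^ card C"
      unfolding plus_state_def prod_state_def using True by (simp add: xvec0)
    ultimately show ?thesis using True CC w_nz
      by (simp add: cluster_gen_def cluster_state_def tens_def gam_def)
  qed (simp add: cluster_gen_def cluster_state_def)
qed

definition Pop where "Pop = op_sites d C CM (\<lambda>a. proj1 (ucol (u a) (s a)))"

lemma Phi_Pop: "Phi = Pop (cluster_state d C E)" unfolding Pop_def Phi_def ..

lemma get_ov_CM: "get Iq n (override_on k j CM) = get Iq n k"
proof -
  have h: "\<And>i. i < n \<Longrightarrow> Iq i \<notin> CM" using dIM CI by auto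
  show ?thesis unfolding get_def override_on_def by (rule ext) (simp add: h)
qed

lemma PST: "Pop (cluster_gen d C E (tens d CI (emb d Iq n \<psi>) (CM \<union> CO) (plus_state d (CM \<union> CO))))
    = (\<lambda>k. (gam * \<psi> (get Iq n k)) * Phi k)"
  unfolding ST Pop_def Phi_def by (rule op_sites_mult) (simp add: get_ov_CM)

definition putI where "putI m = put Iq n (\<lambda>_. 0) m"

lemma putI_I: "i < n \<Longrightarrow> putI m (Iq i) = m i" unfolding putI_def by (simp add: put_L[OF injI])

lemma cfgs_CI: "cfgs CI d = putI ` cfgs {..<n} d"
proof
  show "cfgs CI d \<subseteq> putI ` cfgs {..<n} d"
  proof
    fix j assume j: "j \<in> cfgs CI d"
    have "put Iq n (\<lambda>_. 0) (get Iq n j) = j"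
    proof (rule ext)
      fix a show "put Iq n (\<lambda>_. 0) (get Iq n j) a = j a"
      proof (cases "a \<in> Iq ` {..<n}")
        case True then show ?thesis by (auto simp: put_L[OF injI] get_def)
      next
        case False then show ?thesis using j CI by (simp add: put_out[OF injI] cfgsD0)
      qed
    qed
    moreover have "get Iq n j \<in> cfgs {..<n} d" using get_cfgs[OF injI j] CI by simp
    ultimately show "j \<in> putI ` cfgs {..<n} d" unfolding putI_def by (metis image_eqI)
  qed
next
  show "putI ` cfgs {..<n} d \<subseteq> cfgs CI d"
  proof
    fix x assume "x \<in> putI ` cfgs {..<n} d"
    then obtain j where j: "j \<in> cfgs {..<n} d" "x = putI j" by auto
    show "x \<in> cfgs CI d"
    proof (rule cfgsI)
      fix a assume "a \<in> CI"
      then obtain i where i: "i < n" "a = Iq i" using CI by auto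
      then show "x a < d" using j by (simp add: putI_I cfgsD)
    next
      fix a assume "a \<notin> CI"
      then show "x a = 0" using j CI by (simp add: putI_def put_out[OF injI])
    qed
  qed
qed

lemma inj_putI: "inj_on putI (cfgs {..<n} d)"
  by (rule inj_onI) (metis get_put[OF injI] putI_def)

lemma ov_putI: "override_on k (putI m) CI = put Iq n k m"
  unfolding putI_def override_on_def put_def using CI by (auto intro!: ext)

lemma LHS_eval:
  assumes k: "k \<in> cfgs C d"
  shows "op_sites d C CI Mx \<chi> k = (\<Sum>m\<in>cfgs {..<n} d. (\<Prod>a\<in>CI. Mx a (k a) (putI m a)) * \<chi> (put Iq n k m))"
  unfolding op_sites_def using k by (simp add: cfgs_CI sum.reindex[OF inj_putI] ov_putI)

lemma prod_CI: "(\<Prod>a\<in>CI. g a) = (\<Prod>i<n. g (Iq i))"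
  unfolding CI by (rule prod.reindex[OF injI, unfolded comp_def])

end


lemma xvec_cnj: "cnj (xvec d t m) = qpow d (- (int t * int m)) / complex_of_real (sqrt (real d))"
  unfolding xvec_def by (simp add: qpow_cnj)

lemma per_i:
  assumes d: "d > 0"
  shows "cnj (xvec d t mi) * qpow d (- l * int mi) =
    (qpow d (- (l + int t) * z) / complex_of_real (sqrt (real d))) *
    qpow d ((- l - int t) * int (nat ((int mi - z) mod int d)))"
proof -
  have "int (nat ((int mi - z) mod int d)) = (int mi - z) mod int d" using d by simp
  then have "((- l - int t) * int (nat ((int mi - z) mod int d))) mod int d = ((- l - int t) * (int mi - z)) mod int d"
    by (simp add: mod_mult_right_eq)
  then have "qpow d ((- l - int t) * int (nat ((int mi - z) mod int d))) = qpow d ((- l - int t) * (int mi - z))"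
    by (rule qpow_cong[OF d])
  moreover have "qpow d (- (int t * int mi)) * qpow d (- l * int mi) =
       qpow d (- (l + int t) * z) * qpow d ((- l - int t) * (int mi - z))"
  proof -
    have "qpow d (- (int t * int mi)) * qpow d (- l * int mi) = qpow d (- (int t * int mi) + - l * int mi)"
      by (simp only: qpow_add)
    also have "- (int t * int mi) + - l * int mi = - (l + int t) * z + (- l - int t) * (int mi - z)"
      by (simp add: algebra_simps)
    also have "qpow d \<dots> = qpow d (- (l + int t) * z) * qpow d ((- l - int t) * (int mi - z))"
      by (simp only: qpow_add)
    finally show ?thesis .
  qed
  ultimately show ?thesis by (simp add: xvec_cnj)
qed

context thm2
begin

definition shm :: "(nat \<Rightarrow> nat) \<Rightarrow> nat \<Rightarrow> nat" where
  "shm m = (\<lambda>i. if i < n then nat ((int (m i) - lz i) mod int d) else 0)"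
definition adm :: "(nat \<Rightarrow> nat) \<Rightarrow> nat \<Rightarrow> nat" where
  "adm l = (\<lambda>i. if i < n then nat ((int (l i) + lz i) mod int d) else 0)"

lemma shm_cfgs: "shm m \<in> cfgs {..<n} d"
  unfolding shm_def using d0 by (intro cfgsI) (auto simp: nat_less_iff)
lemma adm_cfgs: "adm m \<in> cfgs {..<n} d"
  unfolding adm_def using d0 by (intro cfgsI) (auto simp: nat_less_iff)

lemma adm_shm: "m \<in> cfgs {..<n} d \<Longrightarrow> adm (shm m) = m"
proof (rule cfgs_eqI[OF adm_cfgs])
  fix i assume m: "m \<in> cfgs {..<n} d" and i: "i < n"
  have "m i < d" using m i by (simp add: cfgsD)
  then have "((int (m i) - lz i) mod int d + lz i) mod int d = int (m i)"
    by (simp add: mod_add_left_eq)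
  then show "adm (shm m) i = m i" unfolding adm_def shm_def using i d0 by simp
qed

lemma shm_adm: "m \<in> cfgs {..<n} d \<Longrightarrow> shm (adm m) = m"
proof (rule cfgs_eqI[OF shm_cfgs])
  fix i assume m: "m \<in> cfgs {..<n} d" and i: "i < n"
  have "m i < d" using m i by (simp add: cfgsD)
  then have "((int (m i) + lz i) mod int d - lz i) mod int d = int (m i)"
    by (simp add: mod_diff_left_eq)
  then show "shm (adm m) i = m i" unfolding adm_def shm_def using i d0 by simp
qed

lemma cond_iff: "a < d \<Longrightarrow> b < d \<Longrightarrow>
   (int a = (int b - z) mod int d) = (int b = (int a + z) mod int d)"
proof -
  assume a: "a < d" and b: "b < d"
  have "(int a = (int b - z) mod int d) = (int d dvd int a - (int b - z))"
    by (rule int_eq_mod_iff) (use a in auto)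
  also have "\<dots> = (int d dvd int b - (int a + z))"
  proof -
    have "int b - (int a + z) = - (int a - (int b - z))" by simp
    then show ?thesis by (simp only: dvd_minus_iff)
  qed
  also have "\<dots> = (int b = (int a + z) mod int d)"
    by (rule int_eq_mod_iff[symmetric]) (use b in auto)
  finally show ?thesis .
qed

definition USig :: "(nat \<Rightarrow> nat) \<Rightarrow> (nat \<Rightarrow> nat) \<Rightarrow> (nat \<Rightarrow> nat) \<Rightarrow> complex" where
  "USig sI = ntens n (\<lambda>i. mmul1 d (Zpow d (- lx i - int (sI i))) (Xpow d (lz i)))"

lemma W_eval:
  assumes l: "l \<in> cfgs {..<n} d"
  shows "nmv d n (USig sI) \<psi> l = (\<Prod>i<n. qpow d ((- lx i - int (sI i)) * int (l i))) * \<psi> (adm l)"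
proof -
  have ent: "USig sI l m = (\<Prod>i<n. qpow d ((- lx i - int (sI i)) * int (l i))) *
      (if m = adm l then 1 else 0)" if m: "m \<in> cfgs {..<n} d" for m
  proof -
    have "USig sI l m = (\<Prod>i<n. qpow d ((- lx i - int (sI i)) * int (l i)) *
          (if int (l i) = (int (m i) - lz i) mod int d then 1 else 0))"
      unfolding USig_def ntens_def
    proof (rule prod.cong[OF refl])
      fix i assume i: "i \<in> {..<n}"
      have li: "l i < d" using l i by (simp add: cfgsD)
      show "mmul1 d (Zpow d (- lx i - int (sI i))) (Xpow d (lz i)) (l i) (m i) =
         qpow d ((- lx i - int (sI i)) * int (l i)) * (if int (l i) = (int (m i) - lz i) mod int d then 1 else 0)"
        unfolding mmul1_def
        by (subst sum_single[where z = "l i"]) (auto simp: Zpow_def Xpow_def li)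
    qed
    also have "\<dots> = (\<Prod>i<n. qpow d ((- lx i - int (sI i)) * int (l i))) *
        (\<Prod>i<n. (if int (l i) = (int (m i) - lz i) mod int d then 1 else 0))"
      by (rule prod.distrib)
    also have "(\<Prod>i<n. (if int (l i) = (int (m i) - lz i) mod int d then 1 else 0 :: complex)) =
        (if m = adm l then 1 else 0)"
    proof -
      have "(\<forall>i\<in>{..<n}. int (l i) = (int (m i) - lz i) mod int d) = (m = adm l)"
      proof
        assume h: "\<forall>i\<in>{..<n}. int (l i) = (int (m i) - lz i) mod int d"
        show "m = adm l"
        proof (rule cfgs_eqI[OF m adm_cfgs])
          fix i assume i: "i < n"
          have "int (m i) = (int (l i) + lz i) mod int d"
            using h i cond_iff[of "l i" "m i" "lz i"] l m by (simp add: cfgsD)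
          then show "m i = adm l i" unfolding adm_def using i by simp
        qed
      next
        assume ma: "m = adm l"
        show "\<forall>i\<in>{..<n}. int (l i) = (int (m i) - lz i) mod int d"
        proof
          fix i assume i: "i \<in> {..<n}"
          have mi: "int (m i) = (int (l i) + lz i) mod int d" using ma i d0 by (simp add: adm_def)
          have "m i < d" "l i < d" using m l i by (auto simp: cfgsD)
          then show "int (l i) = (int (m i) - lz i) mod int d" using cond_iff[of "l i" "m i" "lz i"] mi by simp
        qed
      qed
      then show ?thesis by (simp add: prod_ind)
    qed
    finally show ?thesis .
  qed
  have "nmv d n (USig sI) \<psi> l = (\<Sum>m\<in>cfgs {..<n} d. USig sI l m * \<psi> m)"
    unfolding nmv_def using l by simp
  also have "\<dots> = (\<Sum>m\<in>cfgs {..<n} d. (\<Prod>i<n. qpow d ((- lx i - int (sI i)) * int (l i))) *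
      (if m = adm l then 1 else 0) * \<psi> m)"
    by (rule sum.cong) (simp_all add: ent)
  also have "\<dots> = (\<Prod>i<n. qpow d ((- lx i - int (sI i)) * int (l i))) * \<psi> (adm l)"
    by (subst sum_single[OF _ adm_cfgs]) auto
  finally show ?thesis .
qed

lemma V_eval:
  assumes g: "g \<in> cfgs {..<n} d"
  shows "nmv d n U (nmv d n (USig sI) \<psi>) g = (\<Sum>m\<in>cfgs {..<n} d.
     U g (shm m) * (\<Prod>i<n. qpow d ((- lx i - int (sI i)) * int (shm m i))) * \<psi> m)"
proof -
  have "nmv d n U (nmv d n (USig sI) \<psi>) g = (\<Sum>l\<in>cfgs {..<n} d. U g l * nmv d n (USig sI) \<psi> l)"
    unfolding nmv_def[of d n U] using g by simp
  also have "\<dots> = (\<Sum>l\<in>cfgs {..<n} d. U g l * ((\<Prod>i<n. qpow d ((- lx i - int (sI i)) * int (l i))) * \<psi> (adm l)))"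
    by (rule sum.cong) (simp_all add: W_eval)
  also have "\<dots> = (\<Sum>m\<in>cfgs {..<n} d.
     U g (shm m) * (\<Prod>i<n. qpow d ((- lx i - int (sI i)) * int (shm m i))) * \<psi> m)"
    by (rule sum.reindex_bij_witness[where i = shm and j = adm])
       (auto simp: adm_shm shm_adm adm_cfgs shm_cfgs mult.assoc)
  finally show ?thesis .
qed

lemma RHS_eval:
  assumes k: "k \<in> cfgs C d"
  shows "tens d CI (prod_state d CI xa) (CM \<union> CO)
            (tens d CM (prod_state d CM (\<lambda>a. ucol (u a) (s a))) CO (emb d Oq n V)) k
        = (\<Prod>a\<in>CI. xa a (k a)) * Um k * V (get Oq n k)"
proof -
  have CC: "CI \<union> (CM \<union> CO) = C" using dC by auto
  have r1: "restr CI k \<in> cfgs CI d" by (rule restr_cfgs[OF k CI_sub])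
  have r2: "restr (CM \<union> CO) k \<in> cfgs (CM \<union> CO) d" by (rule restr_cfgs[OF k MO_sub])
  have r3: "restr CM (restr (CM \<union> CO) k) \<in> cfgs CM d" by (rule restr_cfgs[OF r2]) auto
  have r4: "restr CO (restr (CM \<union> CO) k) \<in> cfgs (Oq ` {..<n}) d" using restr_cfgs[OF r2, of CO] CO by auto
  have "prod_state d CI xa (restr CI k) = (\<Prod>a\<in>CI. xa a (k a))"
    unfolding prod_state_def using r1 by (simp add: restr_def)
  moreover have "prod_state d CM (\<lambda>a. ucol (u a) (s a)) (restr CM (restr (CM \<union> CO) k)) = Um k"
    unfolding prod_state_def Um_def using r3 by (simp add: restr_def ucol_def)
  moreover have "emb d Oq n V (restr CO (restr (CM \<union> CO) k)) = V (get Oq n k)"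
  proof -
    have "(\<lambda>i. if i < n then restr CO (restr (CM \<union> CO) k) (Oq i) else 0) = get Oq n k"
      unfolding get_def restr_def using CO by (auto intro!: ext)
    then show ?thesis unfolding emb_def using r4 by simp
  qed
  ultimately show ?thesis using k r2 CC by (simp add: tens_def)
qed

end


context thm2
begin

lemma final:
  "\<exists>c :: complex. c \<noteq> 0 \<and>
     (\<forall>\<psi>in :: (nat \<Rightarrow> nat) \<Rightarrow> complex.
        op_sites d C CI (\<lambda>a. proj1 (xvec d (sI (the_inv_into {..<n} Iq a))))
          (Pop (cluster_gen d C E (tens d CI (emb d Iq n \<psi>in) (CM \<union> CO) (plus_state d (CM \<union> CO)))))
      = (\<lambda>k. c * tens d CI (prod_state d CI (\<lambda>a. xvec d (sI (the_inv_into {..<n} Iq a))))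
                  (CM \<union> CO)
                  (tens d CM (prod_state d CM (\<lambda>a. ucol (u a) (s a)))
                          CO (emb d Oq n
                                (nmv d n U (nmv d n (ntens n (\<lambda>i. mmul1 d (Zpow d (- lx i - int (sI i))) (Xpow d (lz i))))
                                   \<psi>in)))) k))"
proof -
  define kap where "kap i = qpow d (- (lx i + int (sI i)) * lz i) / complex_of_real (sqrt (real d))" for i
  define c where "c = gam * alpha * (\<Prod>i<n. kap i)"
  have kap_nz: "kap i \<noteq> 0" for i unfolding kap_def using d0 by simp
  have c_nz: "c \<noteq> 0" unfolding c_def using gam_nz alpha_nz kap_nz by simp
  define xa where "xa a = xvec d (sI (the_inv_into {..<n} Iq a))" for a
  have "op_sites d C CI (\<lambda>a. proj1 (xa a))
          (Pop (cluster_gen d C E (tens d CI (emb d Iq n \<psi>) (CM \<union> CO) (plus_state d (CM \<union> CO)))))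
      = (\<lambda>k. c * tens d CI (prod_state d CI xa) (CM \<union> CO)
                  (tens d CM (prod_state d CM (\<lambda>a. ucol (u a) (s a)))
                          CO (emb d Oq n (nmv d n U (nmv d n (USig sI) \<psi>)))) k)" for \<psi>
  proof (rule ext)
    fix k
    show "op_sites d C CI (\<lambda>a. proj1 (xa a))
          (Pop (cluster_gen d C E (tens d CI (emb d Iq n \<psi>) (CM \<union> CO) (plus_state d (CM \<union> CO))))) k
      = c * tens d CI (prod_state d CI xa) (CM \<union> CO)
                  (tens d CM (prod_state d CM (\<lambda>a. ucol (u a) (s a)))
                          CO (emb d Oq n (nmv d n U (nmv d n (USig sI) \<psi>)))) k"
    proof (cases "k \<in> cfgs C d")
      case False
      have CC: "CI \<union> (CM \<union> CO) = C" using dC by auto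
      show ?thesis using False CC by (simp add: op_sites_def tens_def)
    next
      case k: True
      define XK where "XK = (\<Prod>a\<in>CI. xa a (k a))"
      define gO where "gO = get Oq n k"
      have gO: "gO \<in> cfgs {..<n} d" unfolding gO_def by (rule get_cfgs[OF injO k subO])
      define F where "F m = U gO (shm m) * (\<Prod>i<n. qpow d ((- lx i - int (sI i)) * int (shm m i))) * \<psi> m" for m
      have RHS: "tens d CI (prod_state d CI xa) (CM \<union> CO)
                  (tens d CM (prod_state d CM (\<lambda>a. ucol (u a) (s a)))
                          CO (emb d Oq n (nmv d n U (nmv d n (USig sI) \<psi>)))) k
          = XK * Um k * (\<Sum>m\<in>cfgs {..<n} d. F m)"
        unfolding RHS_eval[OF k] XK_def F_def gO_def[symmetric] V_eval[OF gO] ..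
      have LHS: "op_sites d C CI (\<lambda>a. proj1 (xa a))
          (Pop (cluster_gen d C E (tens d CI (emb d Iq n \<psi>) (CM \<union> CO) (plus_state d (CM \<union> CO))))) k
        = (\<Sum>m\<in>cfgs {..<n} d. (\<Prod>a\<in>CI. proj1 (xa a) (k a) (putI m a)) *
              ((gam * \<psi> (get Iq n (put Iq n k m))) * Phi (put Iq n k m)))"
        unfolding PST by (rule LHS_eval[OF k])
      also have "\<dots> = (\<Sum>m\<in>cfgs {..<n} d. c * XK * Um k * F m)"
      proof (rule sum.cong[OF refl])
        fix m assume m: "m \<in> cfgs {..<n} d"
        have pk: "put Iq n k m \<in> cfgs C d" by (rule put_cfgs[OF injI k m subI])
        have p1: "(\<Prod>a\<in>CI. proj1 (xa a) (k a) (putI m a)) = XK * (\<Prod>i<n. cnj (xvec d (sI i) (m i)))"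
        proof -
          have "(\<Prod>a\<in>CI. proj1 (xa a) (k a) (putI m a)) = XK * (\<Prod>a\<in>CI. cnj (xa a (putI m a)))"
            unfolding proj1_def XK_def by (rule prod.distrib)
          also have "(\<Prod>a\<in>CI. cnj (xa a (putI m a))) = (\<Prod>i<n. cnj (xvec d (sI i) (m i)))"
            unfolding prod_CI by (rule prod.cong) (simp_all add: xa_def putI_I inv_L[OF injI])
          finally show ?thesis .
        qed
        have oi: "\<And>i. i < n \<Longrightarrow> Oq i \<notin> Iq ` {..<n}" using OI_neq by auto
        have p2: "get Oq n (put Iq n k m) = gO"
          unfolding gO_def get_def by (rule ext) (simp add: put_out[OF injI] oi)
        have p3: "sh (put Iq n k m) = shm m"
          unfolding sh_def shm_def by (rule ext) (simp add: put_L[OF injI])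
        have p4: "Um (put Iq n k m) = Um k"
        proof -
          have "\<And>a. a \<in> CM \<Longrightarrow> a \<notin> Iq ` {..<n}" using dIM CI by auto
          then show ?thesis unfolding Um_def by (intro prod.cong) (simp_all add: put_out[OF injI])
        qed
        have p5: "(\<Prod>i<n. qpow d (- lx i * int (put Iq n k m (Iq i)))) = (\<Prod>i<n. qpow d (- lx i * int (m i)))"
          by (rule prod.cong) (simp_all add: put_L[OF injI])
        have p6: "(\<Prod>i<n. cnj (xvec d (sI i) (m i))) * (\<Prod>i<n. qpow d (- lx i * int (m i)))
           = (\<Prod>i<n. kap i) * (\<Prod>i<n. qpow d ((- lx i - int (sI i)) * int (shm m i)))"
        proof -
          have "(\<Prod>i<n. cnj (xvec d (sI i) (m i))) * (\<Prod>i<n. qpow d (- lx i * int (m i)))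
              = (\<Prod>i<n. cnj (xvec d (sI i) (m i)) * qpow d (- lx i * int (m i)))"
            by (rule prod.distrib[symmetric])
          also have "\<dots> = (\<Prod>i<n. kap i * qpow d ((- lx i - int (sI i)) * int (shm m i)))"
          proof (rule prod.cong[OF refl])
            fix i assume i: "i \<in> {..<n}"
            have e: "shm m i = nat ((int (m i) - lz i) mod int d)" using i by (simp add: shm_def)
            show "cnj (xvec d (sI i) (m i)) * qpow d (- lx i * int (m i)) = kap i * qpow d ((- lx i - int (sI i)) * int (shm m i))"
              unfolding kap_def e by (rule per_i[OF d0])
          qed
          also have "\<dots> = (\<Prod>i<n. kap i) * (\<Prod>i<n. qpow d ((- lx i - int (sI i)) * int (shm m i)))"
            by (rule prod.distrib)
          finally show ?thesis .
        qed
        have "(\<Prod>a\<in>CI. proj1 (xa a) (k a) (putI m a)) * ((gam * \<psi> (get Iq n (put Iq n k m))) * Phi (put Iq n k m))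
           = XK * (\<Prod>i<n. cnj (xvec d (sI i) (m i))) * ((gam * \<psi> m) *
               (U gO (shm m) * (\<Prod>i<n. qpow d (- lx i * int (m i))) * (Um k * alpha)))"
          unfolding p1 Phi_form[OF pk] p2 p3 p4 p5 get_put[OF injI m] ..
        also have "\<dots> = XK * gam * \<psi> m * U gO (shm m) * Um k * alpha *
            ((\<Prod>i<n. cnj (xvec d (sI i) (m i))) * (\<Prod>i<n. qpow d (- lx i * int (m i))))"
          by (simp only: ac_simps)
        also have "\<dots> = c * XK * Um k * F m"
          unfolding p6 c_def F_def by (simp only: ac_simps)
        finally show "(\<Prod>a\<in>CI. proj1 (xa a) (k a) (putI m a)) * ((gam * \<psi> (get Iq n (put Iq n k m))) * Phi (put Iq n k m))
           = c * XK * Um k * F m" .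
      qed
      also have "\<dots> = c * (XK * Um k * (\<Sum>m\<in>cfgs {..<n} d. F m))"
        by (simp add: sum_distrib_left ac_simps)
      finally show ?thesis unfolding RHS .
    qed
  qed
  then show ?thesis using c_nz unfolding xa_def USig_def by blast
qed

end


theorem theorem2:
  fixes d n :: nat
    and C CI CM CO :: "'v set"
    and E :: "'v set set"
    and Iq Oq :: "nat \<Rightarrow> 'v"
    and u :: "'v \<Rightarrow> nat \<Rightarrow> nat \<Rightarrow> complex"
    and s :: "'v \<Rightarrow> nat"
    and U :: "(nat \<Rightarrow> nat) \<Rightarrow> (nat \<Rightarrow> nat) \<Rightarrow> complex"
    and lx lz :: "nat \<Rightarrow> int"
  assumes d: "d \<ge> 2"
    and G: "simple_graph_on C E"
    and decomp: "C = CI \<union> CM \<union> CO" "CI \<inter> CM = {}" "CI \<inter> CO = {}" "CM \<inter> CO = {}"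
    and inI: "inj_on Iq {..<n}" "CI = Iq ` {..<n}"
    and inO: "inj_on Oq {..<n}" "CO = Oq ` {..<n}"
    and u_unit: "\<forall>a\<in>CM. unitary1 d (u a)"
    and s_rng: "\<forall>a\<in>CM. s a < d"
    and U_unit: "nunitary d n U"
    and lam_rng: "\<forall>i<n. 0 \<le> lx i \<and> lx i < int d \<and> 0 \<le> lz i \<and> lz i < int d"
  defines "P \<equiv> op_sites d C CM (\<lambda>a. proj1 (ucol (u a) (s a)))"
    and "S \<equiv> cluster_gen d C E"
  assumes nonzero: "\<exists>k. P (cluster_state d C E) k \<noteq> 0"
    and stabX: "\<forall>i<n. op_at d C (Iq i) (Xm d)
                  (op_on d C Oq n (nmul d n (nmul d n U (nlocal n i (Xm d))) (nadj U))
                    (P (cluster_state d C E)))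
                = (\<lambda>k. qpow d (- lx i) * P (cluster_state d C E) k)"
    and stabZ: "\<forall>i<n. op_at d C (Iq i) (Zdag d)
                  (op_on d C Oq n (nmul d n (nmul d n U (nlocal n i (Zm d))) (nadj U))
                    (P (cluster_state d C E)))
                = (\<lambda>k. qpow d (- lz i) * P (cluster_state d C E) k)"
  shows "\<forall>sI :: nat \<Rightarrow> nat. (\<forall>i<n. sI i < d) \<longrightarrow>
          (\<exists>c :: complex. c \<noteq> 0 \<and>
            (\<forall>\<psi>in :: (nat \<Rightarrow> nat) \<Rightarrow> complex.
               op_sites d C CI (\<lambda>a. proj1 (xvec d (sI (the_inv_into {..<n} Iq a))))
                 (P (S (tens d CI (emb d Iq n \<psi>in) (CM \<union> CO) (plus_state d (CM \<union> CO)))))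
             = (\<lambda>k. c * tens d CI (prod_state d CI (\<lambda>a. xvec d (sI (the_inv_into {..<n} Iq a))))
                         (CM \<union> CO)
                         (tens d CM (prod_state d CM (\<lambda>a. ucol (u a) (s a)))
                                 CO (emb d Oq n
                                       (nmv d n U (nmv d n (ntens n (\<lambda>i. mmul1 d (Zpow d (- lx i - int (sI i))) (Xpow d (lz i))))
                                          \<psi>in)))) k)))"
proof -
  note P_def = assms(15) and S_def = assms(16)
  have finC: "finite C" using G unfolding simple_graph_on_def by simp
  interpret T: thm2 d n C CI CM CO E Iq Oq u s U lx lz "P (cluster_state d C E)"
  proof (unfold_locales)
    show "P (cluster_state d C E) = op_sites d C CM (\<lambda>a. proj1 (ucol (u a) (s a))) (cluster_state d C E)"
      unfolding P_def ..
  qed (use d finC decomp inI inO U_unit nonzero stabX stabZ in auto)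
  show ?thesis unfolding P_def S_def
    by (intro allI impI) (rule T.final[unfolded T.Pop_def])
qed


end
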